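(* Let $Q$ be a quantity space over a field $K$. Then $Q/{\sim}$, with multiplication $[x][y]=[xy]$, is a free abelian group of finite rank.
   Context: A scalable monoid over a (unital, associative) ring $R$ is a monoid $X$ (identity $1_X$, product written $xy$) together with a map $R\times X\to X$, $(\alpha,x)\mapsto\alpha\cdot x$, such that $1\cdot x=x$, $\alpha\cdot(\beta\cdot x)=\alpha\beta\cdot x$ and $\alpha\cdot(xy)=(\alpha\cdot x)y=x(\alpha\cdot y)$ for all $\alpha,\beta\in R$, $x,y\in X$. A quantity space over a field $K$ is a commutative scalable monoid $Q$ over $K$ for which there exists a finite set $\{e_1,\ldots,e_n\}$ of invertible elements of $Q$ (a basis) such that every $x\in Q$ has a unique expansion $x=\mu\cdot\prod_{i=1}^n e_i^{k_i}$ with $\mu\in K$ and $k_1,\ldots,k_n\in\mathbb{Z}$. On $Q$, $x\sim y$ means $\alpha\cdot x=\beta\cdot y$ for some $\alpha,\beta\in K$; this is an equivalence relation compatible with multiplication, $[x]$ denotes the class of $x$ (a dimension), and $Q/{\sim}$ is the set of classes with $[x][y]=[xy]$ and identity $[1_Q]$. *)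

theory Defs
  imports "HOL-Algebra.Free_Abelian_Groups"
begin

definition scalable_monoid :: "('q \<Rightarrow> 'q \<Rightarrow> 'q) \<Rightarrow> 'q \<Rightarrow> ('k::ring_1 \<Rightarrow> 'q \<Rightarrow> 'q) \<Rightarrow> bool" where
  "scalable_monoid m u sc \<longleftrightarrow>
     (\<forall>x y z. m (m x y) z = m x (m y z)) \<and>
     (\<forall>x. m u x = x \<and> m x u = x) \<and>
     (\<forall>x. sc 1 x = x) \<and>
     (\<forall>a b x. sc a (sc b x) = sc (a * b) x) \<and>
     (\<forall>a x y. sc a (m x y) = m (sc a x) y \<and> sc a (m x y) = m x (sc a y))"

definition m_invertible :: "('q \<Rightarrow> 'q \<Rightarrow> 'q) \<Rightarrow> 'q \<Rightarrow> 'q \<Rightarrow> bool" where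
  "m_invertible m u x \<longleftrightarrow> (\<exists>y. m x y = u \<and> m y x = u)"

definition m_inv :: "('q \<Rightarrow> 'q \<Rightarrow> 'q) \<Rightarrow> 'q \<Rightarrow> 'q \<Rightarrow> 'q" where
  "m_inv m u x = (THE y. m x y = u \<and> m y x = u)"

fun m_pow :: "('q \<Rightarrow> 'q \<Rightarrow> 'q) \<Rightarrow> 'q \<Rightarrow> 'q \<Rightarrow> nat \<Rightarrow> 'q" where
  "m_pow m u x 0 = u"
| "m_pow m u x (Suc n) = m x (m_pow m u x n)"

definition m_zpow :: "('q \<Rightarrow> 'q \<Rightarrow> 'q) \<Rightarrow> 'q \<Rightarrow> 'q \<Rightarrow> int \<Rightarrow> 'q" where
  "m_zpow m u x k = (if 0 \<le> k then m_pow m u x (nat k) else m_pow m u (m_inv m u x) (nat (- k)))"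

fun m_prod :: "('q \<Rightarrow> 'q \<Rightarrow> 'q) \<Rightarrow> 'q \<Rightarrow> 'q list \<Rightarrow> 'q" where
  "m_prod m u [] = u"
| "m_prod m u (x # xs) = m x (m_prod m u xs)"

definition basis_monomial :: "('q \<Rightarrow> 'q \<Rightarrow> 'q) \<Rightarrow> 'q \<Rightarrow> 'q list \<Rightarrow> int list \<Rightarrow> 'q" where
  "basis_monomial m u es ks = m_prod m u (map (\<lambda>(e, k). m_zpow m u e k) (zip es ks))"

definition is_qs_basis :: "('q \<Rightarrow> 'q \<Rightarrow> 'q) \<Rightarrow> 'q \<Rightarrow> ('k \<Rightarrow> 'q \<Rightarrow> 'q) \<Rightarrow> 'q list \<Rightarrow> bool" where
  "is_qs_basis m u sc es \<longleftrightarrow>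
     (\<forall>e \<in> set es. m_invertible m u e) \<and>
     (\<forall>x. \<exists>!p. length (snd p) = length es \<and> x = sc (fst p) (basis_monomial m u es (snd p)))"

definition quantity_space :: "('q \<Rightarrow> 'q \<Rightarrow> 'q) \<Rightarrow> 'q \<Rightarrow> ('k::field \<Rightarrow> 'q \<Rightarrow> 'q) \<Rightarrow> bool" where
  "quantity_space m u sc \<longleftrightarrow>
     scalable_monoid m u sc \<and> (\<forall>x y. m x y = m y x) \<and> (\<exists>es. is_qs_basis m u sc es)"

definition qsim :: "('k \<Rightarrow> 'q \<Rightarrow> 'q) \<Rightarrow> 'q \<Rightarrow> 'q \<Rightarrow> bool" where
  "qsim sc x y \<longleftrightarrow> (\<exists>a b. sc a x = sc b y)"

definition dim_class :: "('k \<Rightarrow> 'q \<Rightarrow> 'q) \<Rightarrow> 'q \<Rightarrow> 'q set" where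
  "dim_class sc x = {y. qsim sc x y}"

definition dim_monoid :: "('q \<Rightarrow> 'q \<Rightarrow> 'q) \<Rightarrow> 'q \<Rightarrow> ('k \<Rightarrow> 'q \<Rightarrow> 'q) \<Rightarrow> 'q set monoid" where
  "dim_monoid m u sc =
     \<lparr>carrier = range (dim_class sc),
      monoid.mult = (\<lambda>A B. dim_class sc (m (SOME x. x \<in> A) (SOME y. y \<in> B))),
      one = dim_class sc u\<rparr>"

end

theory Submission
  imports Defs "HOL-Algebra.Ring"
begin

locale qsp =
  fixes m :: "'q \<Rightarrow> 'q \<Rightarrow> 'q" and u :: 'q and sc :: "'k::field \<Rightarrow> 'q \<Rightarrow> 'q"
    and es :: "'q list"
  assumes sm: "scalable_monoid m u sc"
    and cm: "\<And>x y. m x y = m y x"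
    and bas: "is_qs_basis m u sc es"
begin

definition G :: "'q monoid" where "G = \<lparr>carrier = UNIV, mult = m, one = u\<rparr>"
abbreviation "U \<equiv> units_of G"

lemma assoc: "m (m x y) z = m x (m y z)" using sm unfolding scalable_monoid_def by blast
lemma lu: "m u x = x" using sm unfolding scalable_monoid_def by blast
lemma ru: "m x u = x" using sm unfolding scalable_monoid_def by blast
lemma sc1: "sc 1 x = x" using sm unfolding scalable_monoid_def by blast
lemma scsc: "sc a (sc b x) = sc (a * b) x" using sm unfolding scalable_monoid_def by blast
lemma scm1: "sc a (m x y) = m (sc a x) y" using sm unfolding scalable_monoid_def by blast
lemma scm2: "sc a (m x y) = m x (sc a y)" using sm unfolding scalable_monoid_def by blast

lemma G_cm: "comm_monoid G"
  by unfold_locales (auto simp: G_def assoc lu ru intro: cm)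

interpretation GM: comm_monoid G by (rule G_cm)

lemma U_cg: "comm_group U" by (rule GM.units_comm_group)

interpretation UG: comm_group U by (rule U_cg)

lemma G_simps [simp]: "carrier G = UNIV" "mult G = m" "one G = u"
  by (auto simp: G_def)

lemma pow_eq: "m_pow m u x n = x [^]\<^bsub>G\<^esub> n"
  by (induction n) (auto simp: cm)

lemma inv_eq:
  assumes "m_invertible m u x"
  shows "x \<in> Units G" "Defs.m_inv m u x = inv\<^bsub>G\<^esub> x"
proof -
  obtain y where y: "m x y = u" "m y x = u" using assms unfolding m_invertible_def by blast
  show xu: "x \<in> Units G" using y unfolding Units_def by auto
  have "Defs.m_inv m u x = y"
    unfolding Defs.m_inv_def
  proof (rule the_equality)
    fix z assume "m x z = u \<and> m z x = u"
    then show "z = y" using GM.inv_unique[of z x y] y by auto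
  qed (use y in auto)
  moreover have "inv\<^bsub>G\<^esub> x = y"
  proof -
    have "m (inv\<^bsub>G\<^esub> x) x = u" using GM.Units_l_inv[OF xu] by simp
    then show ?thesis using GM.inv_unique[of "inv\<^bsub>G\<^esub> x" x y] y(1) by simp
  qed
  ultimately show "Defs.m_inv m u x = inv\<^bsub>G\<^esub> x" by simp
qed

lemma zpow_eq:
  assumes "m_invertible m u e"
  shows "m_zpow m u e k = e [^]\<^bsub>U\<^esub> k"
proof -
  have eU: "e \<in> carrier U" using inv_eq(1)[OF assms] by (simp add: units_of_carrier)
  have eU': "e \<in> Units G" using inv_eq(1)[OF assms] .
  show ?thesis
  proof (cases "0 \<le> k")
    case True
    have "m_zpow m u e k = m_pow m u e (nat k)" using True by (simp add: m_zpow_def)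
    also have "\<dots> = e [^]\<^bsub>G\<^esub> nat k" by (rule pow_eq)
    also have "\<dots> = e [^]\<^bsub>U\<^esub> nat k" by (rule GM.units_of_pow[OF eU', symmetric])
    also have "\<dots> = e [^]\<^bsub>U\<^esub> k" using True by (metis int_nat_eq int_pow_int)
    finally show ?thesis .
  next
    case False
    have iU: "inv\<^bsub>G\<^esub> e \<in> Units G" using eU' by simp
    have "m_zpow m u e k = m_pow m u (Defs.m_inv m u e) (nat (-k))" using False by (simp add: m_zpow_def)
    also have "\<dots> = (inv\<^bsub>G\<^esub> e) [^]\<^bsub>G\<^esub> nat (-k)"
      by (simp only: pow_eq inv_eq(2)[OF assms])
    also have "\<dots> = (inv\<^bsub>G\<^esub> e) [^]\<^bsub>U\<^esub> nat (-k)"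
      by (rule GM.units_of_pow[OF iU, symmetric])
    also have "\<dots> = (inv\<^bsub>U\<^esub> e) [^]\<^bsub>U\<^esub> nat (-k)"
      by (simp only: GM.units_of_inv[OF eU'])
    also have "\<dots> = inv\<^bsub>U\<^esub> (e [^]\<^bsub>U\<^esub> nat (-k))"
      by (rule UG.nat_pow_inv[OF eU])
    also have "\<dots> = e [^]\<^bsub>U\<^esub> k"
    proof -
      have "k = - int (nat (-k))" using False by simp
      then show ?thesis by (metis UG.int_pow_neg_int eU)
    qed
    finally show ?thesis .
  qed
qed

lemma mono_mult:
  assumes "\<forall>e\<in>set xs. m_invertible m u e" "length ks = length xs" "length ls = length xs"
  shows "basis_monomial m u xs ks \<in> carrier U \<and>
    m (basis_monomial m u xs ks) (basis_monomial m u xs ls) = basis_monomial m u xs (map2 (+) ks ls)"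
  using assms
proof (induction xs arbitrary: ks ls)
  case Nil
  then show ?case using GM.Units_one_closed by (simp add: basis_monomial_def lu units_of_carrier)
next
  case (Cons e xs)
  obtain k ks' where k: "ks = k # ks'" using Cons.prems by (cases ks) auto
  obtain l ls' where l: "ls = l # ls'" using Cons.prems by (cases ls) auto
  have inv: "m_invertible m u e" using Cons.prems by auto
  have eU: "e \<in> carrier U" using inv_eq(1)[OF inv] by (simp add: units_of_carrier)
  have IH: "basis_monomial m u xs ks' \<in> carrier U \<and>
    m (basis_monomial m u xs ks') (basis_monomial m u xs ls') = basis_monomial m u xs (map2 (+) ks' ls')"
    using Cons k l by auto
  have mU: "mult U = m" by (simp add: units_of_mult)
  have bmc: "basis_monomial m u (e # xs) (k # ks') = e [^]\<^bsub>U\<^esub> k \<otimes>\<^bsub>U\<^esub> basis_monomial m u xs ks'" for k ks'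
    unfolding basis_monomial_def mU by (simp add: zpow_eq[OF inv])
  define X where "X = basis_monomial m u xs ks'"
  define Y where "Y = basis_monomial m u xs ls'"
  have XU: "X \<in> carrier U" using IH X_def by simp
  have YU: "Y \<in> carrier U"
  proof -
    have "length ls' = length xs" using Cons.prems l by simp
    then show ?thesis using Cons.IH[of ls' ls'] Cons.prems Y_def by simp
  qed
  have kU: "e [^]\<^bsub>U\<^esub> k \<in> carrier U" using eU by (rule UG.int_pow_closed)
  have lU: "e [^]\<^bsub>U\<^esub> l \<in> carrier U" using eU by (rule UG.int_pow_closed)
  have 1: "basis_monomial m u (e # xs) ks \<in> carrier U"
    unfolding k bmc X_def[symmetric] by (rule UG.m_closed[OF kU XU])
  have "m (basis_monomial m u (e # xs) ks) (basis_monomial m u (e # xs) ls)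
      = (e [^]\<^bsub>U\<^esub> k \<otimes>\<^bsub>U\<^esub> X) \<otimes>\<^bsub>U\<^esub> (e [^]\<^bsub>U\<^esub> l \<otimes>\<^bsub>U\<^esub> Y)"
    unfolding k l bmc X_def Y_def mU ..
  also have "\<dots> = (e [^]\<^bsub>U\<^esub> k \<otimes>\<^bsub>U\<^esub> e [^]\<^bsub>U\<^esub> l) \<otimes>\<^bsub>U\<^esub> (X \<otimes>\<^bsub>U\<^esub> Y)"
    using XU YU kU lU by (simp add: UG.m_ac)
  also have "\<dots> = e [^]\<^bsub>U\<^esub> (k + l) \<otimes>\<^bsub>U\<^esub> basis_monomial m u xs (map2 (+) ks' ls')"
    using IH X_def Y_def mU UG.int_pow_mult[OF eU, of k l] by simp
  also have "\<dots> = basis_monomial m u (e # xs) (map2 (+) ks ls)"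
    unfolding k l by (simp only: bmc zip_Cons_Cons list.map prod.case)
  finally show ?case using 1 by simp
qed

abbreviation "n \<equiv> length es"
abbreviation "BMl ks \<equiv> basis_monomial m u es ks"
abbreviation "D \<equiv> dim_monoid m u sc"

lemma all_inv: "\<forall>e\<in>set es. m_invertible m u e"
  using bas unfolding is_qs_basis_def by blast

lemma uniq:
  assumes "length ks = n" "length ls = n" "sc a (BMl ks) = sc b (BMl ls)"
  shows "ks = ls"
proof -
  have "\<exists>!p. length (snd p) = n \<and> sc a (BMl ks) = sc (fst p) (BMl (snd p))"
    using bas unfolding is_qs_basis_def by blast
  then have "(a, ks) = (b, ls)" using assms by (metis fst_conv snd_conv)
  then show ?thesis by simp
qed

lemma exist: "\<exists>c ks. length ks = n \<and> x = sc c (BMl ks)"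
proof -
  have "\<exists>!p. length (snd p) = n \<and> x = sc (fst p) (BMl (snd p))"
    using bas unfolding is_qs_basis_def by blast
  then show ?thesis by blast
qed

lemma qsim_refl: "qsim sc x x" unfolding qsim_def by blast
lemma qsim_sym: "qsim sc x y \<Longrightarrow> qsim sc y x" unfolding qsim_def by metis
lemma qsim_trans: assumes "qsim sc x y" "qsim sc y z" shows "qsim sc x z"
proof -
  obtain a b where 1: "sc a x = sc b y" using assms unfolding qsim_def by blast
  obtain c d where 2: "sc c y = sc d z" using assms unfolding qsim_def by blast
  have "sc (c * a) x = sc c (sc a x)" by (simp add: scsc)
  also have "\<dots> = sc (c * b) y" using 1 by (simp add: scsc)
  also have "\<dots> = sc b (sc c y)" by (simp add: scsc mult.commute)
  also have "\<dots> = sc (b * d) z" using 2 by (simp add: scsc)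
  finally show ?thesis unfolding qsim_def by blast
qed

lemma qsim_mult: assumes "qsim sc x x'" "qsim sc y y'" shows "qsim sc (m x y) (m x' y')"
proof -
  obtain a b where 1: "sc a x = sc b x'" using assms unfolding qsim_def by blast
  obtain c d where 2: "sc c y = sc d y'" using assms unfolding qsim_def by blast
  have gen: "sc (p * q) (m v w) = m (sc p v) (sc q w)" for p q v w
  proof -
    have "sc (p * q) (m v w) = sc p (sc q (m v w))" by (simp add: scsc)
    also have "\<dots> = sc p (m v (sc q w))" by (simp add: scm2[symmetric])
    also have "\<dots> = m (sc p v) (sc q w)" by (rule scm1)
    finally show ?thesis .
  qed
  have "sc (a * c) (m x y) = m (sc a x) (sc c y)" by (rule gen)
  also have "\<dots> = sc (b * d) (m x' y')" using 1 2 by (simp add: gen)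
  finally show ?thesis unfolding qsim_def by blast
qed

lemma dc_eq: "dim_class sc x = dim_class sc y \<longleftrightarrow> qsim sc x y"
proof
  assume "dim_class sc x = dim_class sc y"
  then have "y \<in> dim_class sc x" using qsim_refl by (simp add: dim_class_def)
  then show "qsim sc x y" by (simp add: dim_class_def)
next
  assume "qsim sc x y"
  then show "dim_class sc x = dim_class sc y"
    unfolding dim_class_def using qsim_trans qsim_sym by blast
qed

lemma some_dc: "qsim sc x (SOME z. z \<in> dim_class sc x)"
proof -
  have "x \<in> dim_class sc x" using qsim_refl by (simp add: dim_class_def)
  then have "(SOME z. z \<in> dim_class sc x) \<in> dim_class sc x" by (rule someI)
  then show ?thesis by (simp add: dim_class_def)
qed

lemma mult_D: "dim_class sc x \<otimes>\<^bsub>D\<^esub> dim_class sc y = dim_class sc (m x y)"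
proof -
  have "qsim sc (m (SOME z. z \<in> dim_class sc x) (SOME z. z \<in> dim_class sc y)) (m x y)"
    using qsim_mult[OF qsim_sym[OF some_dc] qsim_sym[OF some_dc]] .
  then show ?thesis by (simp add: dim_monoid_def dc_eq)
qed

lemma carrier_D: "carrier D = range (dim_class sc)" by (simp add: dim_monoid_def)
lemma one_D: "\<one>\<^bsub>D\<^esub> = dim_class sc u" by (simp add: dim_monoid_def)

lemma monoid_D: "monoid D"
proof (rule monoidI)
  fix A B assume "A \<in> carrier D" "B \<in> carrier D"
  then show "A \<otimes>\<^bsub>D\<^esub> B \<in> carrier D" by (auto simp: carrier_D mult_D)
next
  show "\<one>\<^bsub>D\<^esub> \<in> carrier D" by (simp add: carrier_D one_D)
next
  fix A B C assume "A \<in> carrier D" "B \<in> carrier D" "C \<in> carrier D"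
  then show "A \<otimes>\<^bsub>D\<^esub> B \<otimes>\<^bsub>D\<^esub> C = A \<otimes>\<^bsub>D\<^esub> (B \<otimes>\<^bsub>D\<^esub> C)"
    by (auto simp: carrier_D mult_D assoc)
next
  fix A assume "A \<in> carrier D"
  then show "\<one>\<^bsub>D\<^esub> \<otimes>\<^bsub>D\<^esub> A = A" by (auto simp: carrier_D mult_D one_D lu)
next
  fix A assume "A \<in> carrier D"
  then show "A \<otimes>\<^bsub>D\<^esub> \<one>\<^bsub>D\<^esub> = A" by (auto simp: carrier_D mult_D one_D ru)
qed

definition BM :: "(nat \<Rightarrow>\<^sub>0 int) \<Rightarrow> 'q" where
  "BM f = BMl (map (Poly_Mapping.lookup f) [0..<n])"

definition hh :: "(nat \<Rightarrow>\<^sub>0 int) \<Rightarrow> 'q set" where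
  "hh f = dim_class sc (BM f)"

abbreviation "F \<equiv> free_Abelian_group {..<n}"

lemma BM_add: "BM (f + g) = m (BM f) (BM g)"
proof -
  have "map (Poly_Mapping.lookup (f + g)) [0..<n] = map2 (+) (map (Poly_Mapping.lookup f) [0..<n]) (map (Poly_Mapping.lookup g) [0..<n])"
    by (simp add: lookup_add zip_map_map map_zip_map2[symmetric] map_zip_map zip_same_conv_map o_def)
  then show ?thesis unfolding BM_def using mono_mult[OF all_inv, of "map (Poly_Mapping.lookup f) [0..<n]" "map (Poly_Mapping.lookup g) [0..<n]"]
    by simp
qed

lemma hh_iso: "hh \<in> iso F D"
proof -
  have hom: "hh \<in> hom F D"
    unfolding hom_def by (auto simp: hh_def carrier_D mult_D BM_add)
  have inj: "inj_on hh (carrier F)"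
  proof (rule inj_onI)
    fix f g assume f: "f \<in> carrier F" and g: "g \<in> carrier F" and eq: "hh f = hh g"
    have "qsim sc (BM f) (BM g)" using eq by (simp add: hh_def dc_eq)
    then obtain a b where "sc a (BM f) = sc b (BM g)" unfolding qsim_def by blast
    then have "map (Poly_Mapping.lookup f) [0..<n] = map (Poly_Mapping.lookup g) [0..<n]"
      unfolding BM_def by (rule uniq[rotated 2]) auto
    then have 1: "Poly_Mapping.lookup f i = Poly_Mapping.lookup g i" if "i < n" for i
      using that by (metis (no_types, lifting) atLeastLessThan_iff map_eq_conv set_upt zero_le)
    show "f = g"
    proof (rule poly_mapping_eqI)
      fix i show "Poly_Mapping.lookup f i = Poly_Mapping.lookup g i"
      proof (cases "i < n")
        case True then show ?thesis using 1 by simp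
      next
        case False
        then have "i \<notin> Poly_Mapping.keys f" "i \<notin> Poly_Mapping.keys g" using f g by auto
        then show ?thesis by (simp add: in_keys_iff)
      qed
    qed
  qed
  have surj: "hh ` carrier F = carrier D"
  proof
    show "hh ` carrier F \<subseteq> carrier D" by (auto simp: hh_def carrier_D)
  next
    show "carrier D \<subseteq> hh ` carrier F"
    proof
      fix A assume "A \<in> carrier D"
      then obtain x where A: "A = dim_class sc x" by (auto simp: carrier_D)
      obtain c ks where ks: "length ks = n" "x = sc c (BMl ks)" using exist by blast
      define fn where "fn = (\<lambda>i. if i < n then ks ! i else 0)"
      have fin: "finite {i. fn i \<noteq> 0}"
        by (rule finite_subset[of _ "{..<n}"]) (auto simp: fn_def split: if_splits)
      define f where "f = Abs_poly_mapping fn"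
      have lf: "Poly_Mapping.lookup f = fn" using fin by (simp add: f_def)
      have fF: "f \<in> carrier F" by (auto simp: in_keys_iff lf fn_def split: if_splits)
      have "map (Poly_Mapping.lookup f) [0..<n] = ks" using ks(1) by (auto simp: lf fn_def intro: nth_equalityI)
      then have "BM f = BMl ks" by (simp add: BM_def)
      moreover have "qsim sc (BMl ks) x" using ks(2) unfolding qsim_def by (metis sc1)
      ultimately have "hh f = A" by (simp add: hh_def A dc_eq)
      then show "A \<in> hh ` carrier F" using fF by blast
    qed
  qed
  show ?thesis unfolding iso_def bij_betw_def using hom inj surj by blast
qed

lemma main: "comm_group D \<and> (\<exists>S :: nat set. finite S \<and> D \<cong> F)"
proof -
  have FD: "F \<cong> D" using hh_iso by (rule is_isoI)
  have "comm_group D"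
    by (rule comm_group.iso_imp_comm_group[OF abelian_free_Abelian_group FD monoid_D])
  moreover have "D \<cong> F" by (rule group.iso_sym[OF group_free_Abelian_group FD])
  ultimately show ?thesis by blast
qed

end

theorem proposition3p20:
  fixes m :: "'q \<Rightarrow> 'q \<Rightarrow> 'q" and u :: 'q and sc :: "'k::field \<Rightarrow> 'q \<Rightarrow> 'q"
  assumes "quantity_space m u sc"
  shows "comm_group (dim_monoid m u sc) \<and>
         (\<exists>S :: nat set. finite S \<and> dim_monoid m u sc \<cong> free_Abelian_group S)"
proof -
  obtain es where "scalable_monoid m u sc" "\<And>x y. m x y = m y x" "is_qs_basis m u sc es"
    using assms unfolding quantity_space_def by blast
  then interpret qsp m u sc es by unfold_locales
  show ?thesis using main by blast
qed

end
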